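(* Let $m\ge0$, $n\ge1$, and let $\lambda\in Q_4(m,n)$ have $m$-Durfee rectangle symbol $(\alpha,\beta)_{(m+j)\times j}$ with $s=\ell(\alpha)$, $t=\ell(\beta)$. Then there exists an integer $k$ with $1\le k\le s$ such that $\alpha_{k+1}\le\beta_k-1$ and $\alpha_k\ge\beta_{k+1}-1$.
   Context: Partitions: $\lambda_1\ge\cdots\ge\lambda_\ell>0$, $\ell(\lambda)=\ell$, $\lambda_i=0$ for $i>\ell$ (in particular $\alpha_{s+1}=0$), $s(\lambda)$ the smallest part with $s(\emptyset)=+\infty$. Rank-set of $\lambda$ $=[-\lambda_1,1-\lambda_2,\dots,\ell-1-\lambda_\ell,\ell,\ell+1,\dots]$. $Q(m,n)$: partitions of $n$ whose rank-set contains $m$. $m$-Durfee rectangle symbol $(\alpha,\beta)_{(m+j)\times j}$ of $\lambda$: $j\ge0$ is the largest integer with $\lambda_{m+j}\ge j$; $\alpha$ is the conjugate of $(\lambda_1-j,\dots,\lambda_{m+j}-j)$ and $\beta=(\lambda_{m+j+1},\lambda_{m+j+2},\dots)$. $Q_4(m,n)$ is the set of $\lambda\in Q(m,n)$ whose symbol has $j\ge1$, $\beta_1=j$, $\ell(\beta)-\ell(\alpha)\ge1$, $\alpha_1=m+j>\alpha_2$ and $s(\beta)\ge2$. (For $\lambda\in Q(m,n)$ with $j\ge1$ one always has $\beta_1=j$.) *)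

theory Defs
  imports Main "HOL-Library.Extended_Nat"
begin

definition is_partition :: "nat list \<Rightarrow> bool" where
  "is_partition lam \<longleftrightarrow> sorted_wrt (\<ge>) lam \<and> (\<forall>x\<in>set lam. 0 < x)"

definition part :: "nat list \<Rightarrow> nat \<Rightarrow> nat" where
  "part lam i = (if 1 \<le> i \<and> i \<le> length lam then lam ! (i - 1) else 0)"

definition smallest_part :: "nat list \<Rightarrow> enat" where
  "smallest_part lam = (if lam = [] then \<infinity> else enat (Min (set lam)))"

definition rank_set :: "nat list \<Rightarrow> int set" where
  "rank_set lam = {int (i - 1) - int (part lam i) | i. 1 \<le> i \<and> i \<le> length lam}
                  \<union> {int k | k. length lam \<le> k}"

definition Q :: "nat \<Rightarrow> nat \<Rightarrow> nat list set" where
  "Q m n = {lam. is_partition lam \<and> sum_list lam = n \<and> int m \<in> rank_set lam}"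

definition conjugate :: "nat list \<Rightarrow> nat list" where
  "conjugate mu = map (\<lambda>i. length (filter (\<lambda>x. i \<le> x) mu)) [1..<Suc (Max (set mu \<union> {0}))]"

definition durfee_j :: "nat \<Rightarrow> nat list \<Rightarrow> nat" where
  "durfee_j m lam = (GREATEST j. j \<le> part lam (m + j))"

definition durfee_alpha :: "nat \<Rightarrow> nat list \<Rightarrow> nat list" where
  "durfee_alpha m lam = (let j = durfee_j m lam in
      conjugate (map (\<lambda>x. x - j) (take (m + j) lam)))"

definition durfee_beta :: "nat \<Rightarrow> nat list \<Rightarrow> nat list" where
  "durfee_beta m lam = drop (m + durfee_j m lam) lam"

definition Q4 :: "nat \<Rightarrow> nat \<Rightarrow> nat list set" where
  "Q4 m n = {lam \<in> Q m n.
     (let j = durfee_j m lam; a = durfee_alpha m lam; b = durfee_beta m lam in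
        1 \<le> j \<and> part b 1 = j \<and> int (length b) - int (length a) \<ge> 1
        \<and> part a 1 = m + j \<and> m + j > part a 2 \<and> smallest_part b \<ge> 2)}"

end

theory Submission
  imports Defs
begin

lemma part_anti:
  assumes "sorted_wrt (\<ge>) xs" "1 \<le> i" "i \<le> i'"
  shows "part xs i' \<le> part xs i"
proof (cases "i' \<le> length xs")
  case True
  then show ?thesis using assms unfolding part_def
    by (cases "i = i'") (auto simp: sorted_wrt_iff_nth_less)
next
  case False
  then show ?thesis unfolding part_def by auto
qed

theorem proposition4p4:
  fixes m n :: nat and lam alpha beta :: "nat list"
  assumes "1 \<le> n"
    and "lam \<in> Q4 m n"
    and "alpha = durfee_alpha m lam"
    and "beta = durfee_beta m lam"
  shows "\<exists>k. 1 \<le> k \<and> k \<le> length alpha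
           \<and> int (part alpha (k + 1)) \<le> int (part beta k) - 1
           \<and> int (part alpha k) \<ge> int (part beta (k + 1)) - 1"
proof -
  define j where "j = durfee_j m lam"
  have H: "1 \<le> j" "part beta 1 = j" "int (length beta) - int (length alpha) \<ge> 1"
    "part alpha 1 = m + j" "smallest_part beta \<ge> 2" "is_partition lam"
    using assms(2) unfolding Q4_def Q_def Let_def assms(3,4) j_def by auto
  have sb: "sorted_wrt (\<ge>) beta"
    using H(6) unfolding assms(4) durfee_beta_def is_partition_def
    by (simp add: sorted_wrt_drop)
  define s where "s = length alpha"
  have s1: "1 \<le> s" using H(1,4) unfolding s_def part_def by (auto split: if_splits)
  have st: "s < length beta" using H(3) s_def by linarith
  have bne: "beta \<noteq> []" using st by auto
  have "beta ! (s - 1) \<in> set beta" using st s1 by auto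
  hence mb: "Min (set beta) \<le> beta ! (s-1)" by simp
  moreover have "Min (set beta) \<ge> 2" using H(5) bne unfolding smallest_part_def by simp
  ultimately have "beta ! (s-1) \<ge> 2" by linarith
  hence bs: "part beta s \<ge> 2" using st s1 unfolding part_def by auto
  have as: "part alpha (s+1) = 0" unfolding part_def s_def by auto
  define P where "P k \<longleftrightarrow> 1 \<le> k \<and> part alpha (k+1) + 1 \<le> part beta k" for k
  have Ps: "P s" using bs as s1 unfolding P_def by auto
  define k where "k = (LEAST k. P k)"
  have Pk: "P k" using Ps k_def by (metis LeastI)
  have ks: "k \<le> s" using Ps k_def by (simp add: Least_le)
  have "part beta (k+1) \<le> part alpha k"
  proof (cases "k = 1")
    case True
    then show ?thesis using part_anti[OF sb, of 1 2] H(2,4) by (simp add: numeral_2_eq_2)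
  next
    case False
    hence k2: "k \<ge> 2" using Pk P_def by auto
    have "\<not> P (k-1)" using k2 k_def by (metis diff_less not_less_Least zero_less_one le_trans one_le_numeral not_one_le_zero less_le_trans order_refl Suc_le_eq numeral_2_eq_2 less_imp_le)
    hence "part beta (k-1) \<le> part alpha k" using k2 unfolding P_def by auto
    moreover have "part beta (k+1) \<le> part beta (k-1)" using part_anti[OF sb, of "k-1" "k+1"] k2 by auto
    ultimately show ?thesis by auto
  qed
  thus ?thesis using Pk ks unfolding P_def s_def by (intro exI[of _ k]) auto
qed

end
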